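(* Let $\ell\ge2$, $r_0,\dots,r_\ell\ge1$ integers, $d_0,\dots,d_\ell$ integers with $d_V=\sum_kd_k=0$ and $d_0+d_1\le0$, and let $c$ be a real number with $c>\max_k d_k/r_k$. Then $\Delta_{\Sigma_2}>0$, where $$\Delta_{\Sigma_2}=\sum_{k=2}^\ell\frac{d_k\big(2r_k(1+r_V)c-(r_V+2)d_k\big)}{(r_V+1)r_Vc\,[r_k(r_V+2)c-2d_k]}+\frac{r_V(r_V+2)(r_V+1)c^2-2(r_V+1)(r_V-r_0-r_1)\mu_{01}c-(r_V+2)(d_1+d_0)\mu_{01}}{r_V(r_V+1)c\,[(r_V+2)c-2\mu_{01}]}.$$
   Context: $r_V=\sum_{k=0}^\ell r_k$ and $\mu_{01}=\frac{d_0+d_1}{r_0+r_1}$. *)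

theory Defs
  imports Complex_Main
begin

definition rV :: "nat \<Rightarrow> (nat \<Rightarrow> int) \<Rightarrow> real" where
  "rV l r = real_of_int (\<Sum>k=0..l. r k)"

definition mu01 :: "(nat \<Rightarrow> int) \<Rightarrow> (nat \<Rightarrow> int) \<Rightarrow> real" where
  "mu01 r d = real_of_int (d 0 + d 1) / real_of_int (r 0 + r 1)"

definition DeltaSigma2 :: "nat \<Rightarrow> (nat \<Rightarrow> int) \<Rightarrow> (nat \<Rightarrow> int) \<Rightarrow> real \<Rightarrow> real" where
  "DeltaSigma2 l r d c =
    (let R = rV l r; \<mu> = mu01 r d in
     (\<Sum>k=2..l. of_int (d k) * (2 * of_int (r k) * (1 + R) * c - (R + 2) * of_int (d k))
        / ((R + 1) * R * c * (of_int (r k) * (R + 2) * c - 2 * of_int (d k))))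
     + (R * (R + 2) * (R + 1) * c^2 - 2 * (R + 1) * (R - of_int (r 0) - of_int (r 1)) * \<mu> * c
        - (R + 2) * of_int (d 1 + d 0) * \<mu>)
       / (R * (R + 1) * c * ((R + 2) * c - 2 * \<mu>)))"

end

theory Submission
  imports Defs
begin
lemma perk:
  fixes R r d c :: real
  assumes R: "R > 0" and r: "r > 0" and c: "c > 0" and dc: "d < r * c"
  shows "d * (2 * r * (1 + R) * c - (R + 2) * d) / ((R + 1) * R * c * (r * (R + 2) * c - 2 * d))
     \<ge> (R + 2) / (2 * R * (R + 1) * c) * d - 1 / (2 * (R + 1)) * r"
proof -
  have "2 * d < 2 * (r * c)" using dc by simp
  also have "\<dots> \<le> r * (R + 2) * c" using R r c by (simp add: algebra_simps)
  finally have D: "r * (R + 2) * c - 2 * d > 0" by simp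
  define Q where "Q = (R + 1) * R * c * (r * (R + 2) * c - 2 * d)"
  define P where "P = 2 * R * (R + 1) * c"
  have Qp: "Q > 0" unfolding Q_def using D R c by simp
  have Pp: "P > 0" unfolding P_def using R c by simp
  have key: "d * (2 * r * (1 + R) * c - (R + 2) * d) * P
       - ((R + 2) * d - R * r * c) * Q
     = R * (R + 2) * r * c * (r * c - d) * ((R + 1) * R * c)"
    unfolding P_def Q_def by (simp add: algebra_simps power2_eq_square)
  have pos: "R * (R + 2) * r * c * (r * c - d) * ((R + 1) * R * c) > 0"
    using R r c dc by simp
  have rhs: "(R + 2) / (2 * R * (R + 1) * c) * d - 1 / (2 * (R + 1)) * r
      = ((R + 2) * d - R * r * c) / P"
    unfolding P_def using R c
    by (simp add: divide_simps) (simp add: algebra_simps)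
  have "((R + 2) * d - R * r * c) / P \<le> d * (2 * r * (1 + R) * c - (R + 2) * d) / Q"
    using Pp Qp key pos by (simp add: divide_simps)
  then show ?thesis unfolding rhs Q_def .
qed

lemma fin:
  fixes R T s mu c :: real
  assumes RT: "R = s + T" and s: "s > 0" and T: "T > 0" and mu: "mu \<le> 0" and c: "c > 0"
  shows "((R + 2) / (2 * R * (R + 1) * c) * (- (s * mu)) - 1 / (2 * (R + 1)) * T)
    + (R * (R + 2) * (R + 1) * c^2 - 2 * (R + 1) * T * mu * c - (R + 2) * (s * mu) * mu)
       / (R * (R + 1) * c * ((R + 2) * c - 2 * mu)) > 0"
proof -
  have R: "R > 0" using RT s T by simp
  have "(R + 2) * c > 0" using R c by simp
  then have D: "(R + 2) * c - 2 * mu > 0" using mu by linarith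
  define P where "P = 2 * R * (R + 1) * c * ((R + 2) * c - 2 * mu)"
  have Pp: "P > 0" unfolding P_def using D R c by simp
  define N where "N = R * (R + 2) * c * (c * (R + 2 + s) - mu * (s + 2))"
  have a: "mu * (s + 2) \<le> 0" using mu s by (simp add: mult_nonpos_nonneg)
  have b: "c * (R + 2 + s) > 0" using c R s by simp
  have pos: "N > 0" unfolding N_def using R c a b
    by (intro mult_pos_pos) auto
  have eq: "((R + 2) / (2 * R * (R + 1) * c) * (- (s * mu)) - 1 / (2 * (R + 1)) * T)
    + (R * (R + 2) * (R + 1) * c^2 - 2 * (R + 1) * T * mu * c - (R + 2) * (s * mu) * mu)
       / (R * (R + 1) * c * ((R + 2) * c - 2 * mu)) = N / P"
    unfolding P_def N_def using R c D RT
    by (simp add: divide_simps) (simp add: algebra_simps power2_eq_square)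
  show ?thesis unfolding eq using Pp pos by simp
qed
lemma split01:
  fixes f :: "nat \<Rightarrow> 'a::comm_monoid_add"
  assumes "l \<ge> 2"
  shows "sum f {0..l} = f 0 + f 1 + sum f {2..l}"
proof -
  have "sum f {0..l} = f 0 + sum f {Suc 0..l}" using assms by (simp add: sum.atLeast_Suc_atMost)
  also have "sum f {Suc 0..l} = f 1 + sum f {Suc (Suc 0)..l}" using assms
    by (subst sum.atLeast_Suc_atMost) auto
  finally show ?thesis by (simp add: numeral_2_eq_2 add.assoc)
qed

theorem lemma3p21:
  fixes l :: nat and r d :: "nat \<Rightarrow> int" and c :: real
  assumes "l \<ge> 2"
    and "\<forall>k\<in>{0..l}. r k \<ge> 1"
    and "(\<Sum>k=0..l. d k) = 0"
    and "d 0 + d 1 \<le> 0"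
    and "c > Max ((\<lambda>k. real_of_int (d k) / real_of_int (r k)) ` {0..l})"
  shows "DeltaSigma2 l r d c > 0"
proof -
  have rpos: "real_of_int (r k) > 0" if "k \<le> l" for k using assms(2) that by force
  have dlt: "real_of_int (d k) < real_of_int (r k) * c" if "k \<le> l" for k
  proof -
    have "real_of_int (d k) / real_of_int (r k) \<le> Max ((\<lambda>k. real_of_int (d k) / real_of_int (r k)) ` {0..l})"
      using that by (intro Max_ge) auto
    then have "real_of_int (d k) / real_of_int (r k) < c" using assms(5) by linarith
    then show ?thesis using rpos[OF that] by (simp add: divide_simps mult.commute)
  qed
  have cpos: "c > 0"
  proof (rule ccontr)
    assume "\<not> c > 0"
    then have "d k < 0" if "k \<le> l" for k
    proof -
      have "real_of_int (r k) * c \<le> 0" using rpos[OF that] \<open>\<not> c > 0\<close>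
        by (simp add: mult_nonneg_nonpos)
      then show ?thesis using dlt[OF that] by linarith
    qed
    then have "(\<Sum>k=0..l. d k) < (\<Sum>k=0..l. (0::int))"
      by (intro sum_strict_mono) auto
    then show False using assms(3) by simp
  qed
  define R where "R = rV l r"
  define mu where "mu = mu01 r d"
  define s where "s = real_of_int (r 0 + r 1)"
  define T where "T = real_of_int (\<Sum>k=2..l. r k)"
  have spos: "s > 0" unfolding s_def using rpos[of 0] rpos[of 1] assms(1) by simp
  have Tpos: "T > 0"
  proof -
    have "(\<Sum>k=2..l. real_of_int (r k)) > 0" using rpos assms(1)
      by (intro sum_pos) auto
    then show ?thesis unfolding T_def by (simp add: of_int_sum[symmetric] del: of_int_sum)
  qed
  have RT: "R = s + T" unfolding R_def rV_def s_def T_def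
    using split01[OF assms(1), of r] by simp
  have mu0: "mu \<le> 0" unfolding mu_def mu01_def using assms(4) spos s_def
    by (simp add: divide_nonpos_pos)
  have smu: "real_of_int (d 1 + d 0) = s * mu" unfolding mu_def mu01_def s_def
    using spos s_def by (simp add: add.commute)
  have dsum: "(\<Sum>k=2..l. real_of_int (d k)) = - (s * mu)"
  proof -
    have "(\<Sum>k=0..l. d k) = d 0 + d 1 + (\<Sum>k=2..l. d k)" by (rule split01[OF assms(1)])
    then have "(\<Sum>k=2..l. d k) = - (d 1 + d 0)" using assms(3) by simp
    then have "real_of_int (\<Sum>k=2..l. d k) = - real_of_int (d 1 + d 0)" by simp
    then show ?thesis using smu by simp
  qed
  have Rpos: "R > 0" using RT spos Tpos by simp
  define A where "A = (R + 2) / (2 * R * (R + 1) * c)"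
  define B where "B = 1 / (2 * (R + 1))"
  have sumb: "(\<Sum>k=2..l. of_int (d k) * (2 * of_int (r k) * (1 + R) * c - (R + 2) * of_int (d k))
        / ((R + 1) * R * c * (of_int (r k) * (R + 2) * c - 2 * of_int (d k))))
     \<ge> (\<Sum>k=2..l. A * real_of_int (d k) - B * real_of_int (r k))"
    unfolding A_def B_def
    by (intro sum_mono perk[OF Rpos _ cpos]) (use rpos dlt in auto)
  have sumeq: "(\<Sum>k=2..l. A * real_of_int (d k) - B * real_of_int (r k)) = A * (- (s * mu)) - B * T"
    by (simp add: sum_subtractf sum_distrib_left[symmetric] dsum T_def)
  have last: "R - of_int (r 0) - of_int (r 1) = T" using RT s_def by simp
  have "DeltaSigma2 l r d c \<ge> (A * (- (s * mu)) - B * T)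
     + (R * (R + 2) * (R + 1) * c^2 - 2 * (R + 1) * T * mu * c - (R + 2) * (s * mu) * mu)
       / (R * (R + 1) * c * ((R + 2) * c - 2 * mu))"
    unfolding DeltaSigma2_def Let_def R_def[symmetric] mu_def[symmetric] last smu
    using sumb sumeq by linarith
  moreover have "(A * (- (s * mu)) - B * T)
     + (R * (R + 2) * (R + 1) * c^2 - 2 * (R + 1) * T * mu * c - (R + 2) * (s * mu) * mu)
       / (R * (R + 1) * c * ((R + 2) * c - 2 * mu)) > 0"
    unfolding A_def B_def by (rule fin[OF RT spos Tpos mu0 cpos])
  ultimately show ?thesis by linarith
qed
end
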